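(* Let $P\subseteq S_n$ be a permutation array with Hamming distance ${\rm hd}(P)=d$. Then $|P^{{\sf CT}^m}|=|P|$ for every positive integer $m<d/3$.
   Context: $S_n$ is the symmetric group on $\{0,1,\ldots,n-1\}$. A permutation array is a non-empty subset $P\subseteq S_n$. The Hamming distance of $\sigma,\tau\in S_n$ is ${\rm hd}(\sigma,\tau)=|\{x:\sigma(x)\neq\tau(x)\}|$, and ${\rm hd}(P)=\min\{{\rm hd}(\sigma,\tau):\sigma,\tau\in P,\ \sigma\neq\tau\}$. The contraction of $\sigma\in S_n$ is $\sigma^{\sf CT}\in S_{n-1}$ (on $\{0,\ldots,n-2\}$) defined by $\sigma^{\sf CT}(x)=\sigma(n-1)$ if $x=\sigma^{-1}(n-1)$ and $\sigma^{\sf CT}(x)=\sigma(x)$ otherwise (i.e. delete $n-1$ from the cycle notation of $\sigma$). For $1\le m\le n-1$, $\sigma^{{\sf CT}^m}=(\sigma^{{\sf CT}^{m-1}})^{\sf CT}\in S_{n-m}$ with $\sigma^{{\sf CT}^1}=\sigma^{\sf CT}$, and $P^{{\sf CT}^m}=\{\sigma^{{\sf CT}^m}:\sigma\in P\}$. *)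

theory Defs
  imports "HOL-Combinatorics.Permutations"
begin

text \<open>Permutations of {0,...,n-1} are represented as functions nat \<Rightarrow> nat with
  \<sigma> permutes {..<n} (identity outside {..<n}).\<close>

definition hd :: "nat \<Rightarrow> (nat \<Rightarrow> nat) \<Rightarrow> (nat \<Rightarrow> nat) \<Rightarrow> nat" where
  "hd n \<sigma> \<tau> = card {x \<in> {..<n}. \<sigma> x \<noteq> \<tau> x}"

definition hdP :: "nat \<Rightarrow> (nat \<Rightarrow> nat) set \<Rightarrow> nat" where
  "hdP n P = Min {hd n \<sigma> \<tau> | \<sigma> \<tau>. \<sigma> \<in> P \<and> \<tau> \<in> P \<and> \<sigma> \<noteq> \<tau>}"

text \<open>Contraction S_n \<rightarrow> S_(n-1): the element mapped to n-1 is sent to \<sigma>(n-1),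
  and n-1 becomes a fixed point (i.e. deleted from the support).\<close>
definition ct :: "nat \<Rightarrow> (nat \<Rightarrow> nat) \<Rightarrow> (nat \<Rightarrow> nat)" where
  "ct n \<sigma> = (\<lambda>x. if x = n - 1 then x else if \<sigma> x = n - 1 then \<sigma> (n - 1) else \<sigma> x)"

fun ctm :: "nat \<Rightarrow> nat \<Rightarrow> (nat \<Rightarrow> nat) \<Rightarrow> (nat \<Rightarrow> nat)" where
  "ctm n 0 \<sigma> = \<sigma>"
| "ctm n (Suc m) \<sigma> = ct (n - m) (ctm n m \<sigma>)"

end

theory Submission
  imports Defs
begin

lemma ct_eq:
  assumes "inj \<sigma>"
  shows "ct k \<sigma> = Transposition.transpose (k-1) (\<sigma> (k-1)) \<circ> \<sigma>"
proof
  fix x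
  show "ct k \<sigma> x = (Transposition.transpose (k-1) (\<sigma> (k-1)) \<circ> \<sigma>) x"
    using assms unfolding ct_def by (auto simp: transpose_def dest: injD)
qed

lemma ctm_inj: "inj \<sigma> \<Longrightarrow> inj (ctm n m \<sigma>)"
proof (induction m)
  case 0 then show ?case by simp
next
  case (Suc m)
  then have "inj (ctm n m \<sigma>)" by blast
  then show ?case by (simp add: ct_eq inj_compose del: comp_apply)
qed

lemma count_lemma:
  assumes "inj \<sigma>"
  shows "finite ({x\<in>{..<n}. ctm n m \<sigma> x \<noteq> \<sigma> x} - {n-m..<n})
    \<and> card ({x\<in>{..<n}. ctm n m \<sigma> x \<noteq> \<sigma> x} - {n-m..<n}) \<le> m"
proof (induction m)
  case 0 then show ?case by simp
next
  case (Suc m)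
  define \<rho> where "\<rho> = ctm n m \<sigma>"
  have injr: "inj \<rho>" using ctm_inj[OF assms] \<rho>_def by simp
  define S where "S = {x\<in>{..<n}. ctm n m \<sigma> x \<noteq> \<sigma> x} - {n-m..<n}"
  define B where "B = {..<n} \<inter> {x. \<rho> x = n - Suc m}"
  have sub: "{x\<in>{..<n}. ctm n (Suc m) \<sigma> x \<noteq> \<sigma> x} - {n - Suc m..<n} \<subseteq> S \<union> B"
  proof
    fix x assume x: "x \<in> {x\<in>{..<n}. ctm n (Suc m) \<sigma> x \<noteq> \<sigma> x} - {n - Suc m..<n}"
    then have xl: "x < n - Suc m" "x < n" by auto
    have e: "ctm n (Suc m) \<sigma> x = (if \<rho> x = n - Suc m then \<rho> (n - Suc m) else \<rho> x)"
      using xl by (simp add: ct_def \<rho>_def)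
    show "x \<in> S \<union> B"
    proof (cases "\<rho> x = n - Suc m")
      case True then show ?thesis using xl by (simp add: B_def)
    next
      case False then show ?thesis using xl x e by (auto simp: S_def \<rho>_def)
    qed
  qed
  have fB: "finite B" by (simp add: B_def)
  have cB: "card B \<le> 1"
  proof -
    have "\<forall>x\<in>B. \<forall>y\<in>B. x = y"
    proof (intro ballI)
      fix x y assume "x \<in> B" "y \<in> B"
      then have "\<rho> x = \<rho> y" by (simp add: B_def)
      then show "x = y" using injr by (simp add: inj_def)
    qed
    then show ?thesis unfolding One_nat_def card_le_Suc0_iff_eq[OF fB] .
  qed
  have fS: "finite S" "card S \<le> m" using Suc S_def by auto
  have "card (S \<union> B) \<le> card S + card B" by (rule card_Un_le)
  moreover have "finite (S \<union> B)" using fS fB by simp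
  ultimately have "card ({x\<in>{..<n}. ctm n (Suc m) \<sigma> x \<noteq> \<sigma> x} - {n - Suc m..<n}) \<le> card S + card B"
    using sub card_mono[of "S \<union> B"] by (meson le_trans)
  moreover have "finite ({x\<in>{..<n}. ctm n (Suc m) \<sigma> x \<noteq> \<sigma> x} - {n - Suc m..<n})" by (rule finite_subset[of _ "{..<n}"]) auto
  ultimately show ?case using fS(2) cB by (intro conjI) linarith+
qed

theorem theorem3p1:
  fixes n m :: nat and P :: "(nat \<Rightarrow> nat) set"
  assumes "P \<noteq> {}" and "\<forall>\<sigma>\<in>P. \<sigma> permutes {..<n}"
    and "0 < m" and "3 * m < hdP n P"
  shows "card (ctm n m ` P) = card P"
proof -
  have "inj_on (ctm n m) P"
  proof (rule inj_onI, rule ccontr)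
    fix \<sigma> \<tau> assume s: "\<sigma> \<in> P" and t: "\<tau> \<in> P" and eq: "ctm n m \<sigma> = ctm n m \<tau>"
      and ne: "\<sigma> \<noteq> \<tau>"
    have inj2: "inj \<sigma>" "inj \<tau>" using s t assms(2) permutes_inj by blast+
    define S1 where "S1 = {x\<in>{..<n}. ctm n m \<sigma> x \<noteq> \<sigma> x} - {n-m..<n}"
    define S2 where "S2 = {x\<in>{..<n}. ctm n m \<tau> x \<noteq> \<tau> x} - {n-m..<n}"
    have c1: "finite S1" "card S1 \<le> m" using count_lemma[OF inj2(1)] S1_def by auto
    have c2: "finite S2" "card S2 \<le> m" using count_lemma[OF inj2(2)] S2_def by auto
    have sub: "{x \<in> {..<n}. \<sigma> x \<noteq> \<tau> x} \<subseteq> {n-m..<n} \<union> S1 \<union> S2"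
    proof
      fix x assume x: "x \<in> {x \<in> {..<n}. \<sigma> x \<noteq> \<tau> x}"
      show "x \<in> {n-m..<n} \<union> S1 \<union> S2"
      proof (rule ccontr)
        assume a: "x \<notin> {n-m..<n} \<union> S1 \<union> S2"
        have "x < n" "\<sigma> x \<noteq> \<tau> x" using x by auto
        then have "ctm n m \<sigma> x = \<sigma> x" "ctm n m \<tau> x = \<tau> x"
          using a unfolding S1_def S2_def by blast+
        then show False using eq \<open>\<sigma> x \<noteq> \<tau> x\<close> by metis
      qed
    qed
    have u: "card ({n-m..<n} \<union> S1 \<union> S2) \<le> card {n-m..<n} + card S1 + card S2"
      by (meson card_Un_le add_le_mono1 le_trans)
    have cm: "card {n-m..<n} \<le> m" by simp
    have fu: "finite ({n-m..<n} \<union> S1 \<union> S2)" using c1 c2 by simp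
    have "hd n \<sigma> \<tau> \<le> card ({n-m..<n} \<union> S1 \<union> S2)"
      unfolding hd_def by (rule card_mono[OF fu sub])
    then have h: "hd n \<sigma> \<tau> \<le> 3 * m" using u cm c1(2) c2(2) by linarith
    have fin: "finite {hd n \<sigma> \<tau> | \<sigma> \<tau>. \<sigma> \<in> P \<and> \<tau> \<in> P \<and> \<sigma> \<noteq> \<tau>}"
    proof (rule finite_subset[of _ "{..n}"])
      show "{hd n \<sigma> \<tau> | \<sigma> \<tau>. \<sigma> \<in> P \<and> \<tau> \<in> P \<and> \<sigma> \<noteq> \<tau>} \<subseteq> {..n}"
      proof
        fix k assume "k \<in> {hd n \<sigma> \<tau> | \<sigma> \<tau>. \<sigma> \<in> P \<and> \<tau> \<in> P \<and> \<sigma> \<noteq> \<tau>}"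
        then obtain a b where "k = hd n a b" by blast
        moreover have "card {x \<in> {..<n}. a x \<noteq> b x} \<le> card {..<n}"
          by (rule card_mono) auto
        ultimately show "k \<in> {..n}" by (simp add: hd_def)
      qed
    qed simp
    have "hdP n P \<le> hd n \<sigma> \<tau>" unfolding hdP_def
      by (rule Min_le[OF fin]) (use s t ne in blast)
    then show False using h assms(4) by linarith
  qed
  then show ?thesis by (rule card_image)
qed

end
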